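(* There is a universal constant $C>0$ such that for all $q>2$, integers $n,p\ge1$ and $\sigma,B>0$, \[ \mathcal{E}_q(\sigma,B)\le C\min\{B,\,U^*(q,\sigma,B,p,n)\}, \] where \[ U^*(q,\sigma,B,p,n)=\begin{cases}\sigma\sqrt{\dfrac{\ln(2p)}n}, & \text{if } (B^2/\sigma^2)^{q/(q-2)}(\ln(2p)/n)\le e,\\[2ex] B\Big(\dfrac{\ln(2p)}n\Big)^{1-1/q}\Big[\ln\Big(\dfrac{B^2}{\sigma^2}\Big(\dfrac{\ln(2p)}n\Big)^{1-2/q}\Big)\Big]^{1/q-1}, & \text{if } (B^2/\sigma^2)^{q/(q-2)}(\ln(2p)/n)>e.\end{cases} \]
   Context: For independent mean-zero random vectors $\boldsymbol{X}_1,\dots,\boldsymbol{X}_n$ in $\mathbb{R}^p$ with joint law $P^n$, set $\mathcal{V}(P^n)=\max_{1\le j\le p}\frac1n\sum_{i=1}^n\mathbb{E}[X_i(j)^2]$ and $\mathcal{D}_q(P^n)=(\frac1n\sum_{i=1}^n\mathbb{E}[\max_{1\le j\le p}|X_i(j)|^q])^{1/q}$. $\mathcal{E}_q(\sigma,B)$ is the supremum of $\mathbb{E}[\max_{1\le j\le p}|\frac1n\sum_{i=1}^nX_i(j)|]$ over all such laws with $\mathcal{V}(P^n)\le\sigma^2$ and $\mathcal{D}_q(P^n)\le B$. The constant $C$ does not depend on $n,p,q,\sigma,B$. *)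

theory Defs
  imports "HOL-Probability.Probability"
begin

text \<open>Independent random vectors
  X_1..X_n are represented by their marginal laws mu 0, ..., mu (n-1); their joint
  law P^n is the product measure PiM {..<n} mu.\<close>

definition vec_space :: "nat \<Rightarrow> (nat \<Rightarrow> real) measure" where
  "vec_space p = PiM {..<p} (\<lambda>_. borel)"

text \<open>Admissible families of laws: probability laws on R^p, mean zero,
  with V(P^n) \<le> sigma^2 and D_q(P^n) \<le> B (the latter written as
  (1/n) sum_i E[max_j |X_i(j)|^q] \<le> B^q).\<close>

definition admissible_laws ::
  "real \<Rightarrow> real \<Rightarrow> real \<Rightarrow> nat \<Rightarrow> nat \<Rightarrow> (nat \<Rightarrow> (nat \<Rightarrow> real) measure) set" where
  "admissible_laws q \<sigma> B p n =
    {\<mu>. (\<forall>i<n. prob_space (\<mu> i) \<and> sets (\<mu> i) = sets (vec_space p)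
            \<and> (\<forall>j<p. integrable (\<mu> i) (\<lambda>x. x j) \<and> (\<integral>x. x j \<partial>\<mu> i) = 0))
       \<and> (\<forall>j<p. (\<Sum>i<n. \<integral>\<^sup>+x. ennreal ((x j)\<^sup>2) \<partial>\<mu> i) / ennreal (real n)
                  \<le> ennreal (\<sigma>\<^sup>2))
       \<and> (\<Sum>i<n. \<integral>\<^sup>+x. ennreal (Max ((\<lambda>j. \<bar>x j\<bar>) ` {..<p}) powr q) \<partial>\<mu> i)
              / ennreal (real n) \<le> ennreal (B powr q)}"

definition E_q :: "real \<Rightarrow> real \<Rightarrow> real \<Rightarrow> nat \<Rightarrow> nat \<Rightarrow> ennreal" where
  "E_q q \<sigma> B p n =
    (SUP \<mu>\<in>admissible_laws q \<sigma> B p n.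
       \<integral>\<^sup>+x. ennreal (Max ((\<lambda>j. \<bar>(\<Sum>i<n. x i j) / real n\<bar>) ` {..<p}))
         \<partial>(PiM {..<n} \<mu>))"

definition U_star :: "real \<Rightarrow> real \<Rightarrow> real \<Rightarrow> nat \<Rightarrow> nat \<Rightarrow> real" where
  "U_star q \<sigma> B p n =
    (let L = ln (2 * real p) / real n; r = B\<^sup>2 / \<sigma>\<^sup>2 in
     if r powr (q / (q - 2)) * L \<le> exp 1 then \<sigma> * sqrt L
     else B * L powr (1 - 1 / q) * (ln (r * L powr (1 - 2 / q))) powr (1 / q - 1))"

end

theory Submission imports Defs begin

definition mx :: "nat \<Rightarrow> (nat \<Rightarrow> real) \<Rightarrow> real" where
  "mx p y = Max ((\<lambda>j. \<bar>y j\<bar>) ` {..<p})"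
definition trv :: "nat \<Rightarrow> real \<Rightarrow> nat \<Rightarrow> (nat \<Rightarrow> real) \<Rightarrow> real" where
  "trv p \<tau> j y = (if mx p y \<le> \<tau> then y j else 0)"
definition tlv :: "nat \<Rightarrow> real \<Rightarrow> (nat \<Rightarrow> real) \<Rightarrow> real" where
  "tlv p \<tau> y = (if mx p y \<le> \<tau> then 0 else mx p y)"

lemma mx_ge: "j < p \<Longrightarrow> \<bar>y j\<bar> \<le> mx p y"
  unfolding mx_def by (intro Max_ge) auto

lemma mx_nonneg: "p \<ge> 1 \<Longrightarrow> 0 \<le> mx p y"
  using mx_ge[of 0 p y] by auto

lemma meas_comp:
  assumes "sets N = sets (vec_space p)" "j < p"
  shows "(\<lambda>y. y j) \<in> borel_measurable N"
proof -
  have "(\<lambda>y. y j) \<in> borel_measurable (vec_space p)"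
    unfolding vec_space_def using assms(2) by (intro measurable_component_singleton) auto
  then show ?thesis using measurable_cong_sets[OF assms(1) refl] by blast
qed

lemma meas_mx:
  assumes "sets N = sets (vec_space p)"
  shows "mx p \<in> borel_measurable N"
  unfolding mx_def
  by (rule borel_measurable_Max) (auto intro!: borel_measurable_abs meas_comp[OF assms])

lemma meas_tr:
  assumes "sets N = sets (vec_space p)" "j < p"
  shows "trv p \<tau> j \<in> borel_measurable N"
proof -
  note [measurable] = meas_mx[OF assms(1)] meas_comp[OF assms]
  show ?thesis unfolding trv_def by measurable
qed

lemma meas_tl:
  assumes "sets N = sets (vec_space p)"
  shows "tlv p \<tau> \<in> borel_measurable N"
proof -
  note [measurable] = meas_mx[OF assms(1)]
  show ?thesis unfolding tlv_def by measurable
qed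

lemma tr_abs: "j < p \<Longrightarrow> \<bar>trv p \<tau> j y\<bar> \<le> \<bar>y j\<bar>"
  unfolding trv_def by auto
lemma tr_bnd: "j < p \<Longrightarrow> \<bar>trv p \<tau> j y\<bar> \<le> \<tau> \<or> trv p \<tau> j y = 0"
  unfolding trv_def using mx_ge[of j p y] by auto
lemma tr_diff: "j < p \<Longrightarrow> \<bar>y j - trv p \<tau> j y\<bar> \<le> tlv p \<tau> y"
  unfolding trv_def tlv_def using mx_ge[of j p y] by auto
lemma tl_nonneg: "p \<ge> 1 \<Longrightarrow> 0 \<le> tlv p \<tau> y"
  unfolding tlv_def using mx_nonneg[of p y] by auto
lemma tl_pow: assumes "p \<ge> 1" "\<tau> > 0" "q \<ge> 1"
  shows "tlv p \<tau> y \<le> \<tau> powr (1 - q) * mx p y powr q"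
proof (cases "mx p y \<le> \<tau>")
  case True then show ?thesis by (simp add: tlv_def)
next
  case False
  then have m: "mx p y > \<tau>" by simp
  have "mx p y = \<tau> powr (1 - q) * (\<tau> powr (q - 1) * mx p y)"
    using assms by (simp add: powr_add[symmetric])
  also have "\<dots> \<le> \<tau> powr (1 - q) * (mx p y powr (q - 1) * mx p y)"
    using assms m by (intro mult_left_mono mult_right_mono powr_mono2) auto
  also have "\<dots> = \<tau> powr (1 - q) * mx p y powr q"
  proof -
    have "mx p y powr (q - 1) * mx p y = mx p y powr (q - 1) * mx p y powr 1"
      using m assms by (simp add: powr_one)
    also have "\<dots> = mx p y powr q" by (subst powr_add[symmetric]) simp
    finally show ?thesis by simp
  qed
  finally show ?thesis using False by (simp add: tlv_def)
qed

lemma exp_taylor2: "exp (u::real) \<le> 1 + u + u\<^sup>2 * exp \<bar>u\<bar> / 2"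
proof -
  obtain t where t: "\<bar>t\<bar> \<le> \<bar>u\<bar>" "exp u = (\<Sum>m<2. u ^ m / fact m) + exp t / fact 2 * u ^ 2"
    using Maclaurin_exp_le[of u 2] by blast
  have "exp t \<le> exp \<bar>u\<bar>" using t(1) by simp
  then have "exp t / 2 * u ^ 2 \<le> exp \<bar>u\<bar> / 2 * u ^ 2"
    by (intro mult_right_mono) auto
  moreover have "exp u = 1 + u + exp t / 2 * u ^ 2" using t(2) by (simp add: eval_nat_numeral)
  moreover have "exp \<bar>u\<bar> / 2 * u ^ 2 = u\<^sup>2 * exp \<bar>u\<bar> / 2" by simp
  ultimately show ?thesis by linarith
qed

lemma mgf_bound:
  fixes N :: "(nat \<Rightarrow> real) measure"
  assumes N: "prob_space N" "sets N = sets (vec_space p)" and j: "j < p"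
    and int1: "integrable N (\<lambda>y. y j)" and mean: "(\<integral>y. y j \<partial>N) = 0"
    and int2: "integrable N (\<lambda>y. (y j)\<^sup>2)" and int3: "integrable N (tlv p \<tau>)"
    and tau: "\<tau> > 0" and lam: "lm > 0" "\<bar>s\<bar> \<le> lm"
  shows "(\<integral>\<^sup>+y. ennreal (exp (s * trv p \<tau> j y)) \<partial>N)
     \<le> ennreal (1 + lm * (\<integral>y. tlv p \<tau> y \<partial>N) + lm\<^sup>2 * exp (lm * \<tau>) / 2 * (\<integral>y. (y j)\<^sup>2 \<partial>N))"
proof -
  interpret prob_space N by fact
  define c where "c = lm\<^sup>2 * exp (lm * \<tau>) / 2"
  have c0: "c \<ge> 0" unfolding c_def by simp
  have p1: "p \<ge> 1" using j by simp
  define g where "g y = 1 + s * y j + lm * tlv p \<tau> y + c * (y j)\<^sup>2" for y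
  have pt: "exp (s * trv p \<tau> j y) \<le> g y" for y
  proof -
    define u where "u = s * trv p \<tau> j y"
    have "exp u \<le> 1 + u + u\<^sup>2 * exp \<bar>u\<bar> / 2" by (rule exp_taylor2)
    moreover have "u \<le> s * y j + lm * tlv p \<tau> y"
    proof -
      have "u = s * y j - s * (y j - trv p \<tau> j y)" unfolding u_def by algebra
      moreover have "\<bar>s * (y j - trv p \<tau> j y)\<bar> \<le> lm * tlv p \<tau> y"
        unfolding abs_mult using tr_diff[OF j, of y \<tau>] lam
        by (intro mult_mono) auto
      ultimately show ?thesis by linarith
    qed
    moreover have "u\<^sup>2 * exp \<bar>u\<bar> / 2 \<le> c * (y j)\<^sup>2"
    proof -
      have a: "\<bar>u\<bar> \<le> lm * \<tau>"
        using tr_bnd[OF j, of \<tau> y] lam tau unfolding u_def abs_mult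
        by (auto intro!: mult_mono)
      have b: "u\<^sup>2 \<le> lm\<^sup>2 * (y j)\<^sup>2"
      proof -
        have "\<bar>u\<bar> \<le> lm * \<bar>y j\<bar>" unfolding u_def abs_mult
          using tr_abs[OF j, of \<tau> y] lam by (intro mult_mono) auto
        then have "\<bar>u\<bar>\<^sup>2 \<le> (lm * \<bar>y j\<bar>)\<^sup>2" by (intro power_mono) auto
        then show ?thesis by (simp add: power_mult_distrib)
      qed
      have "u\<^sup>2 * exp \<bar>u\<bar> \<le> (lm\<^sup>2 * (y j)\<^sup>2) * exp (lm * \<tau>)"
        using a b by (intro mult_mono) auto
      then show ?thesis unfolding c_def by (simp add: field_simps)
    qed
    ultimately show ?thesis unfolding g_def u_def by linarith
  qed
  note [measurable] = meas_tr[OF N(2) j] meas_comp[OF N(2) j] meas_tl[OF N(2)]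
  have intg: "integrable N g"
    unfolding g_def using int1 int2 int3 by (intro Bochner_Integration.integrable_add integrable_mult_right integrable_const) auto
  have "(\<integral>\<^sup>+y. ennreal (exp (s * trv p \<tau> j y)) \<partial>N) \<le> (\<integral>\<^sup>+y. ennreal (g y) \<partial>N)"
    using pt by (intro nn_integral_mono) (simp add: ennreal_leI)
  also have "\<dots> = ennreal (\<integral>y. g y \<partial>N)"
  proof (rule nn_integral_eq_integral[OF intg])
    show "AE x in N. 0 \<le> g x" using pt by (intro AE_I2) (auto intro: order.trans[OF less_imp_le[OF exp_gt_zero]])
  qed
  also have "(\<integral>y. g y \<partial>N) = 1 + lm * (\<integral>y. tlv p \<tau> y \<partial>N) + c * (\<integral>y. (y j)\<^sup>2 \<partial>N)"
    unfolding g_def using int1 int2 int3 mean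
    by (simp add: integral_add integral_mult_right prob_space)
  finally show ?thesis unfolding c_def .
qed

lemma ennreal_div_le_imp:
  assumes "a / ennreal (real n) \<le> b" "n \<ge> 1"
  shows "a \<le> b * ennreal (real n)"
proof -
  have "a / ennreal (real n) * ennreal (real n) \<le> b * ennreal (real n)"
    using assms(1) by (rule mult_right_mono) simp
  moreover have "a / ennreal (real n) * ennreal (real n) = a"
    using assms(2) by (simp add: ennreal_divide_times)
  ultimately show ?thesis by simp
qed

context
  fixes q \<sigma> B :: real and p n :: nat and \<mu> :: "nat \<Rightarrow> (nat \<Rightarrow> real) measure"
  assumes adm: "\<mu> \<in> admissible_laws q \<sigma> B p n" and n1: "n \<ge> 1" and p1: "p \<ge> 1"
    and q1: "q \<ge> 1" and sig: "\<sigma> > 0" and Bpos: "B > 0"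
begin

lemma ps: "i < n \<Longrightarrow> prob_space (\<mu> i)"
  and sets_mu: "i < n \<Longrightarrow> sets (\<mu> i) = sets (vec_space p)"
  and int1: "i < n \<Longrightarrow> j < p \<Longrightarrow> integrable (\<mu> i) (\<lambda>x. x j)"
  and mean0: "i < n \<Longrightarrow> j < p \<Longrightarrow> (\<integral>x. x j \<partial>\<mu> i) = 0"
  and VV: "j < p \<Longrightarrow> (\<Sum>i<n. \<integral>\<^sup>+x. ennreal ((x j)\<^sup>2) \<partial>\<mu> i) / ennreal (real n) \<le> ennreal (\<sigma>\<^sup>2)"
  and QQ: "(\<Sum>i<n. \<integral>\<^sup>+x. ennreal (mx p x powr q) \<partial>\<mu> i) / ennreal (real n) \<le> ennreal (B powr q)"
  using adm unfolding admissible_laws_def mx_def by auto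

lemma VV': "j < p \<Longrightarrow> (\<Sum>i<n. \<integral>\<^sup>+x. ennreal ((x j)\<^sup>2) \<partial>\<mu> i) \<le> ennreal (\<sigma>\<^sup>2 * real n)"
  using ennreal_div_le_imp[OF VV n1] by (simp add: ennreal_mult)

lemma QQ': "(\<Sum>i<n. \<integral>\<^sup>+x. ennreal (mx p x powr q) \<partial>\<mu> i) \<le> ennreal (B powr q * real n)"
  using ennreal_div_le_imp[OF QQ n1] by (simp add: ennreal_mult)

lemma int_sq:
  assumes i: "i < n" and j: "j < p"
  shows "integrable (\<mu> i) (\<lambda>y. (y j)\<^sup>2)"
proof (rule integrableI_nonneg)
  note [measurable] = meas_comp[OF sets_mu[OF i] j]
  show "(\<lambda>y. (y j)\<^sup>2) \<in> borel_measurable (\<mu> i)" by measurable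
  show "AE x in \<mu> i. 0 \<le> (x j)\<^sup>2" by simp
  have "(\<integral>\<^sup>+x. ennreal ((x j)\<^sup>2) \<partial>\<mu> i) \<le> (\<Sum>i<n. \<integral>\<^sup>+x. ennreal ((x j)\<^sup>2) \<partial>\<mu> i)"
    using i by (intro member_le_sum) auto
  also have "\<dots> \<le> ennreal (\<sigma>\<^sup>2 * real n)" by (rule VV'[OF j])
  finally have X: "(\<integral>\<^sup>+x. ennreal ((x j)\<^sup>2) \<partial>\<mu> i) \<le> ennreal (\<sigma>\<^sup>2 * real n)" .
  show "(\<integral>\<^sup>+x. ennreal ((x j)\<^sup>2) \<partial>\<mu> i) < \<infinity>"
    using le_less_trans[OF X ennreal_less_top] by simp
qed

lemma tl_nn:
  assumes i: "i < n" and tau: "\<tau> > 0"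
  shows "(\<integral>\<^sup>+y. ennreal (tlv p \<tau> y) \<partial>\<mu> i) \<le> ennreal (\<tau> powr (1 - q)) * (\<integral>\<^sup>+x. ennreal (mx p x powr q) \<partial>\<mu> i)"
proof -
  note [measurable] = meas_mx[OF sets_mu[OF i]]
  have "(\<integral>\<^sup>+y. ennreal (tlv p \<tau> y) \<partial>\<mu> i) \<le> (\<integral>\<^sup>+y. ennreal (\<tau> powr (1 - q)) * ennreal (mx p y powr q) \<partial>\<mu> i)"
  proof (intro nn_integral_mono)
    fix y
    have "ennreal (tlv p \<tau> y) \<le> ennreal (\<tau> powr (1 - q) * mx p y powr q)"
      using tl_pow[OF p1 tau q1] by (rule ennreal_leI)
    also have "\<dots> = ennreal (\<tau> powr (1 - q)) * ennreal (mx p y powr q)"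
      by (rule ennreal_mult) auto
    finally show "ennreal (tlv p \<tau> y) \<le> ennreal (\<tau> powr (1 - q)) * ennreal (mx p y powr q)" .
  qed
  also have "\<dots> = ennreal (\<tau> powr (1 - q)) * (\<integral>\<^sup>+x. ennreal (mx p x powr q) \<partial>\<mu> i)"
    by (rule nn_integral_cmult) measurable
  finally show ?thesis .
qed

lemma int_tl:
  assumes i: "i < n" and tau: "\<tau> > 0"
  shows "integrable (\<mu> i) (tlv p \<tau>)"
proof (rule integrableI_nonneg)
  show "tlv p \<tau> \<in> borel_measurable (\<mu> i)" by (rule meas_tl[OF sets_mu[OF i]])
  show "AE x in \<mu> i. 0 \<le> tlv p \<tau> x" using tl_nonneg[OF p1] by simp
  have "(\<integral>\<^sup>+x. ennreal (mx p x powr q) \<partial>\<mu> i) \<le> (\<Sum>i<n. \<integral>\<^sup>+x. ennreal (mx p x powr q) \<partial>\<mu> i)"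
    using i by (intro member_le_sum) auto
  also have "\<dots> \<le> ennreal (B powr q * real n)" by (rule QQ')
  finally have X: "(\<integral>\<^sup>+x. ennreal (mx p x powr q) \<partial>\<mu> i) \<le> ennreal (B powr q * real n)" .
  have "(\<integral>\<^sup>+x. ennreal (mx p x powr q) \<partial>\<mu> i) < \<infinity>"
    using le_less_trans[OF X ennreal_less_top] by simp
  then have "ennreal (\<tau> powr (1 - q)) * (\<integral>\<^sup>+x. ennreal (mx p x powr q) \<partial>\<mu> i) < \<infinity>"
    by (simp add: ennreal_mult_less_top)
  then show "(\<integral>\<^sup>+x. ennreal (tlv p \<tau> x) \<partial>\<mu> i) < \<infinity>"
    by (rule le_less_trans[OF tl_nn[OF i tau]])
qed

lemma T_sum:
  assumes tau: "\<tau> > 0"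
  shows "(\<Sum>i<n. \<integral>y. tlv p \<tau> y \<partial>\<mu> i) \<le> real n * (\<tau> powr (1 - q) * B powr q)"
proof -
  have e: "ennreal (\<integral>y. tlv p \<tau> y \<partial>\<mu> i) = (\<integral>\<^sup>+y. ennreal (tlv p \<tau> y) \<partial>\<mu> i)" if i: "i < n" for i
    using int_tl[OF i tau] tl_nonneg[OF p1] by (intro nn_integral_eq_integral[symmetric]) auto
  have nn: "0 \<le> (\<integral>y. tlv p \<tau> y \<partial>\<mu> i)" for i
    using tl_nonneg[OF p1] by (intro integral_nonneg_AE) auto
  have "ennreal (\<Sum>i<n. \<integral>y. tlv p \<tau> y \<partial>\<mu> i) = (\<Sum>i<n. ennreal (\<integral>y. tlv p \<tau> y \<partial>\<mu> i))"
    using nn by simp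
  also have "\<dots> = (\<Sum>i<n. \<integral>\<^sup>+y. ennreal (tlv p \<tau> y) \<partial>\<mu> i)"
    using e by simp
  also have "\<dots> \<le> (\<Sum>i<n. ennreal (\<tau> powr (1 - q)) * (\<integral>\<^sup>+x. ennreal (mx p x powr q) \<partial>\<mu> i))"
    using tl_nn[OF _ tau] by (intro sum_mono) auto
  also have "\<dots> = ennreal (\<tau> powr (1 - q)) * (\<Sum>i<n. \<integral>\<^sup>+x. ennreal (mx p x powr q) \<partial>\<mu> i)"
    by (simp add: sum_distrib_left)
  also have "\<dots> \<le> ennreal (\<tau> powr (1 - q)) * ennreal (B powr q * real n)"
    by (intro mult_left_mono QQ') simp
  also have "\<dots> = ennreal (real n * (\<tau> powr (1 - q) * B powr q))"
    by (simp add: ennreal_mult[symmetric] mult_ac)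
  finally show ?thesis by (subst (asm) ennreal_le_iff) auto
qed

lemma V_sum:
  assumes j: "j < p"
  shows "(\<Sum>i<n. \<integral>y. (y j)\<^sup>2 \<partial>\<mu> i) \<le> real n * \<sigma>\<^sup>2"
proof -
  have e: "ennreal (\<integral>y. (y j)\<^sup>2 \<partial>\<mu> i) = (\<integral>\<^sup>+y. ennreal ((y j)\<^sup>2) \<partial>\<mu> i)" if i: "i < n" for i
    using int_sq[OF i j] by (intro nn_integral_eq_integral[symmetric]) auto
  have nn: "0 \<le> (\<integral>y. (y j)\<^sup>2 \<partial>\<mu> i)" for i
    by (intro integral_nonneg_AE) auto
  have "ennreal (\<Sum>i<n. \<integral>y. (y j)\<^sup>2 \<partial>\<mu> i) = (\<Sum>i<n. ennreal (\<integral>y. (y j)\<^sup>2 \<partial>\<mu> i))"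
    using nn by simp
  also have "\<dots> = (\<Sum>i<n. \<integral>\<^sup>+y. ennreal ((y j)\<^sup>2) \<partial>\<mu> i)"
    using e by simp
  also have "\<dots> \<le> ennreal (\<sigma>\<^sup>2 * real n)" by (rule VV'[OF j])
  finally show ?thesis by (subst (asm) ennreal_le_iff) (auto simp: mult_ac)
qed


lemma comp_int:
  assumes i: "i < n" and f: "f \<in> borel_measurable (\<mu> i)"
  shows "(\<integral>\<^sup>+x. f (x i) \<partial>PiM {..<n} \<mu>) = (\<integral>\<^sup>+y. f y \<partial>\<mu> i)"
proof -
  have d: "distr (PiM {..<n} \<mu>) (\<mu> i) (\<lambda>\<omega>. \<omega> i) = \<mu> i"
    using ps i by (intro distr_PiM_component) auto
  have "(\<integral>\<^sup>+y. f y \<partial>\<mu> i) = (\<integral>\<^sup>+y. f y \<partial>distr (PiM {..<n} \<mu>) (\<mu> i) (\<lambda>\<omega>. \<omega> i))"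
    by (simp add: d)
  also have "\<dots> = (\<integral>\<^sup>+x. f (x i) \<partial>PiM {..<n} \<mu>)"
    using i f d by (intro nn_integral_distr) (auto intro: measurable_component_singleton)
  finally show ?thesis by simp
qed

lemma mgfR:
  assumes tau: "\<tau> > 0" and lm: "lm > 0" and s: "\<bar>s\<bar> \<le> lm" and j: "j < p"
  shows "(\<integral>\<^sup>+x. ennreal (exp (s * (\<Sum>i<n. trv p \<tau> j (x i)))) \<partial>PiM {..<n} \<mu>)
     \<le> ennreal (exp (lm * (real n * (\<tau> powr (1 - q) * B powr q)) + lm\<^sup>2 * exp (lm * \<tau>) / 2 * (real n * \<sigma>\<^sup>2)))"
proof -
  define \<mu>' where "\<mu>' i = (if i < n then \<mu> i else \<mu> 0)" for i
  have n0: "0 < n" using n1 by simp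
  have PiM_eq: "PiM {..<n} \<mu> = PiM {..<n} \<mu>'" by (rule PiM_cong) (auto simp: \<mu>'_def)
  have ps': "prob_space (\<mu>' i)" for i using ps n0 by (auto simp: \<mu>'_def)
  have sets': "sets (\<mu>' i) = sets (vec_space p)" for i using sets_mu n0 by (auto simp: \<mu>'_def)
  interpret PS: product_sigma_finite \<mu>'
    unfolding product_sigma_finite_def using prob_space_imp_sigma_finite[OF ps'] by blast
  define c where "c = lm\<^sup>2 * exp (lm * \<tau>) / 2"
  define a where "a i = lm * (\<integral>y. tlv p \<tau> y \<partial>\<mu> i) + c * (\<integral>y. (y j)\<^sup>2 \<partial>\<mu> i)" for i
  have "(\<integral>\<^sup>+x. ennreal (exp (s * (\<Sum>i<n. trv p \<tau> j (x i)))) \<partial>PiM {..<n} \<mu>)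
      = (\<integral>\<^sup>+x. (\<Prod>i<n. ennreal (exp (s * trv p \<tau> j (x i)))) \<partial>PiM {..<n} \<mu>')"
    unfolding PiM_eq
    by (intro nn_integral_cong) (simp add: sum_distrib_left exp_sum prod_ennreal)
  also have "\<dots> = (\<Prod>i<n. \<integral>\<^sup>+y. ennreal (exp (s * trv p \<tau> j y)) \<partial>\<mu>' i)"
  proof (rule PS.product_nn_integral_prod)
    fix i
    note [measurable] = meas_tr[OF sets' j]
    show "(\<lambda>y. ennreal (exp (s * trv p \<tau> j y))) \<in> borel_measurable (\<mu>' i)" by measurable
  qed simp
  also have "\<dots> = (\<Prod>i<n. \<integral>\<^sup>+y. ennreal (exp (s * trv p \<tau> j y)) \<partial>\<mu> i)"
    by (intro prod.cong) (auto simp: \<mu>'_def)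
  also have "\<dots> \<le> (\<Prod>i<n. ennreal (1 + a i))"
  proof (rule prod_mono_ennreal)
    fix i assume "i \<in> {..<n}"
    then have i: "i < n" by simp
    show "(\<integral>\<^sup>+y. ennreal (exp (s * trv p \<tau> j y)) \<partial>\<mu> i) \<le> ennreal (1 + a i)"
      unfolding a_def c_def
      using mgf_bound[OF ps[OF i] sets_mu[OF i] j int1[OF i j] mean0[OF i j] int_sq[OF i j] int_tl[OF i tau] tau lm s] by (simp add: add.assoc)
  qed
  also have "\<dots> = ennreal (\<Prod>i<n. (1 + a i))"
  proof (rule prod_ennreal)
    fix i assume "i \<in> {..<n}"
    have "0 \<le> (\<integral>y. tlv p \<tau> y \<partial>\<mu> i)" using tl_nonneg[OF p1] by (intro integral_nonneg_AE) auto
    moreover have "0 \<le> (\<integral>y. (y j)\<^sup>2 \<partial>\<mu> i)" by (intro integral_nonneg_AE) auto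
    moreover have "c \<ge> 0" unfolding c_def by simp
    ultimately show "0 \<le> 1 + a i" unfolding a_def using lm by (simp add: add_nonneg_nonneg)
  qed
  also have "\<dots> \<le> ennreal (\<Prod>i<n. exp (a i))"
  proof (intro ennreal_leI prod_mono conjI)
    fix i assume "i \<in> {..<n}"
    have "0 \<le> (\<integral>y. tlv p \<tau> y \<partial>\<mu> i)" using tl_nonneg[OF p1] by (intro integral_nonneg_AE) auto
    moreover have "0 \<le> (\<integral>y. (y j)\<^sup>2 \<partial>\<mu> i)" by (intro integral_nonneg_AE) auto
    moreover have "c \<ge> 0" unfolding c_def by simp
    ultimately show "0 \<le> 1 + a i" unfolding a_def using lm by (simp add: add_nonneg_nonneg)
    show "1 + a i \<le> exp (a i)" by (rule exp_ge_add_one_self)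
  qed
  also have "\<dots> = ennreal (exp (\<Sum>i<n. a i))" by (simp add: exp_sum)
  also have "\<dots> \<le> ennreal (exp (lm * (real n * (\<tau> powr (1 - q) * B powr q)) + c * (real n * \<sigma>\<^sup>2)))"
  proof -
    have "(\<Sum>i<n. a i) = lm * (\<Sum>i<n. \<integral>y. tlv p \<tau> y \<partial>\<mu> i) + c * (\<Sum>i<n. \<integral>y. (y j)\<^sup>2 \<partial>\<mu> i)"
      unfolding a_def by (simp add: sum.distrib sum_distrib_left)
    also have "\<dots> \<le> lm * (real n * (\<tau> powr (1 - q) * B powr q)) + c * (real n * \<sigma>\<^sup>2)"
      using T_sum[OF tau] V_sum[OF j] lm unfolding c_def
      by (intro add_mono mult_left_mono) auto
    finally have "(\<Sum>i<n. a i) \<le> lm * (real n * (\<tau> powr (1 - q) * B powr q)) + c * (real n * \<sigma>\<^sup>2)" .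
    then show ?thesis by (intro ennreal_leI) simp
  qed
  finally show ?thesis unfolding c_def .
qed


lemma main_bound:
  assumes tau: "\<tau> > 0" and lm: "lm > 0"
  shows "(\<integral>\<^sup>+x. ennreal (Max ((\<lambda>j. \<bar>(\<Sum>i<n. x i j) / real n\<bar>) ` {..<p})) \<partial>PiM {..<n} \<mu>)
     \<le> ennreal ((1 + ln (2 * real p)) / (real n * lm) + 2 * (\<tau> powr (1 - q) * B powr q) + lm * exp (lm * \<tau>) * \<sigma>\<^sup>2 / 2)"
proof -
  define \<Omega> where "\<Omega> = PiM {..<n} \<mu>"
  have n0: "0 < n" using n1 by simp
  interpret PP: prob_space \<Omega> unfolding \<Omega>_def using ps by (intro prob_space_PiM) auto
  define A where "A = lm * (real n * (\<tau> powr (1 - q) * B powr q)) + lm\<^sup>2 * exp (lm * \<tau>) / 2 * (real n * \<sigma>\<^sup>2)"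
  have A0: "A \<ge> 0" unfolding A_def using lm by simp
  define K where "K = 2 * real p * exp A"
  have K1: "K \<ge> 1"
  proof -
    have "1 \<le> exp A" using A0 by simp
    moreover have "1 \<le> 2 * real p" using p1 by simp
    ultimately have "1 * 1 \<le> 2 * real p * exp A" by (intro mult_mono) auto
    then show ?thesis unfolding K_def by simp
  qed
  have K0: "K > 0" using K1 by simp
  define R where "R j x = (\<Sum>i<n. trv p \<tau> j (x i))" for j x
  define Tl where "Tl x = (\<Sum>i<n. tlv p \<tau> (x i))" for x
  define E where "E x = (\<Sum>j<p. exp (lm * R j x) + exp (- lm * R j x))" for x
  define c1 where "c1 = 1 / (real n * lm * K)"
  define c2 where "c2 = ln K / (real n * lm)"
  define c3 where "c3 = 1 / real n"
  have c0: "c1 \<ge> 0" "c2 \<ge> 0" "c3 \<ge> 0" unfolding c1_def c2_def c3_def using K1 lm by auto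
  have pt: "Max ((\<lambda>j. \<bar>(\<Sum>i<n. x i j) / real n\<bar>) ` {..<p}) \<le> c1 * E x + c2 + c3 * Tl x" for x
  proof -
    have "Max ((\<lambda>j. \<bar>(\<Sum>i<n. x i j) / real n\<bar>) ` {..<p}) \<in> (\<lambda>j. \<bar>(\<Sum>i<n. x i j) / real n\<bar>) ` {..<p}"
      using p1 by (intro Max_in) (auto simp: lessThan_empty_iff)
    then obtain j0 where j0: "j0 < p"
      and mx0: "Max ((\<lambda>j. \<bar>(\<Sum>i<n. x i j) / real n\<bar>) ` {..<p}) = \<bar>(\<Sum>i<n. x i j0) / real n\<bar>"
      by auto
    have h1: "\<bar>\<Sum>i<n. x i j0\<bar> \<le> \<bar>R j0 x\<bar> + Tl x"
    proof -
      have eq: "(\<Sum>i<n. x i j0) = R j0 x + (\<Sum>i<n. x i j0 - trv p \<tau> j0 (x i))"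
        unfolding R_def by (simp add: sum_subtractf)
      have "\<bar>\<Sum>i<n. x i j0 - trv p \<tau> j0 (x i)\<bar> \<le> (\<Sum>i<n. \<bar>x i j0 - trv p \<tau> j0 (x i)\<bar>)"
        by (rule sum_abs)
      also have "\<dots> \<le> Tl x" unfolding Tl_def using tr_diff[OF j0] by (intro sum_mono) auto
      finally show ?thesis using eq by linarith
    qed
    have h2: "lm * \<bar>R j0 x\<bar> \<le> exp (lm * \<bar>R j0 x\<bar>) / K + ln K"
    proof -
      have "exp (lm * \<bar>R j0 x\<bar>) / K = exp (lm * \<bar>R j0 x\<bar> - ln K)" using K0 by (simp add: exp_diff)
      moreover have "1 + (lm * \<bar>R j0 x\<bar> - ln K) \<le> exp (lm * \<bar>R j0 x\<bar> - ln K)" by (rule exp_ge_add_one_self)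
      ultimately show ?thesis by linarith
    qed
    have h3: "exp (lm * \<bar>R j0 x\<bar>) \<le> E x"
    proof -
      have "exp (lm * \<bar>R j0 x\<bar>) \<le> exp (lm * R j0 x) + exp (- lm * R j0 x)"
        by (cases "R j0 x \<ge> 0") (auto simp: add_increasing add_increasing2 less_imp_le)
      also have "\<dots> \<le> E x" unfolding E_def using j0
        by (intro member_le_sum) (auto intro: add_nonneg_nonneg less_imp_le)
      finally show ?thesis .
    qed
    have h4: "\<bar>R j0 x\<bar> \<le> (E x / K + ln K) / lm"
    proof -
      have "exp (lm * \<bar>R j0 x\<bar>) / K \<le> E x / K" using h3 K0 by (intro divide_right_mono) auto
      then have "lm * \<bar>R j0 x\<bar> \<le> E x / K + ln K" using h2 by linarith
      then show ?thesis using lm by (simp add: pos_le_divide_eq mult.commute)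
    qed
    have "Max ((\<lambda>j. \<bar>(\<Sum>i<n. x i j) / real n\<bar>) ` {..<p}) = \<bar>\<Sum>i<n. x i j0\<bar> / real n"
      using mx0 by simp
    also have "\<dots> \<le> ((E x / K + ln K) / lm + Tl x) / real n"
      using h1 h4 n0 by (intro divide_right_mono) auto
    also have "\<dots> = c1 * E x + c2 + c3 * Tl x"
      unfolding c1_def c2_def c3_def using K0 lm n0 by (simp add: field_simps)
    finally show ?thesis .
  qed
  have mcomp: "(\<lambda>x. f (x i)) \<in> borel_measurable \<Omega>" if "i < n" "f \<in> borel_measurable (\<mu> i)" for f i
    unfolding \<Omega>_def using that by (intro measurable_compose[OF measurable_component_singleton]) auto
  have mR: "(\<lambda>x. R j x) \<in> borel_measurable \<Omega>" if j: "j < p" for j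
    unfolding R_def by (intro borel_measurable_sum mcomp meas_tr[OF sets_mu j]) auto
  have mtl: "(\<lambda>x. ennreal (tlv p \<tau> (x i))) \<in> borel_measurable \<Omega>" if i: "i < n" for i
    using mcomp[OF i meas_tl[OF sets_mu[OF i]]] by measurable
  have mexp: "(\<lambda>x. ennreal (exp (s * R j x))) \<in> borel_measurable \<Omega>" if j: "j < p" for j s
    using mR[OF j] by measurable
  have T_eq: "(\<integral>\<^sup>+x. ennreal (tlv p \<tau> (x i)) \<partial>\<Omega>) = ennreal (\<integral>y. tlv p \<tau> y \<partial>\<mu> i)" if i: "i < n" for i
  proof -
    have "(\<integral>\<^sup>+x. ennreal (tlv p \<tau> (x i)) \<partial>\<Omega>) = (\<integral>\<^sup>+y. ennreal (tlv p \<tau> y) \<partial>\<mu> i)"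
      unfolding \<Omega>_def using meas_tl[OF sets_mu[OF i]] by (intro comp_int[OF i]) measurable
    also have "\<dots> = ennreal (\<integral>y. tlv p \<tau> y \<partial>\<mu> i)"
      using int_tl[OF i tau] tl_nonneg[OF p1] by (intro nn_integral_eq_integral) auto
    finally show ?thesis .
  qed
  have Tnn: "0 \<le> (\<integral>y. tlv p \<tau> y \<partial>\<mu> i)" for i
    using tl_nonneg[OF p1] by (intro integral_nonneg_AE) auto
  have "(\<integral>\<^sup>+x. ennreal (Max ((\<lambda>j. \<bar>(\<Sum>i<n. x i j) / real n\<bar>) ` {..<p})) \<partial>\<Omega>)
      \<le> (\<integral>\<^sup>+x. (ennreal c1 * (\<Sum>j<p. ennreal (exp (lm * R j x)) + ennreal (exp (- lm * R j x)))
             + ennreal c2) + ennreal c3 * (\<Sum>i<n. ennreal (tlv p \<tau> (x i))) \<partial>\<Omega>)"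
  proof (intro nn_integral_mono)
    fix x
    have "ennreal (Max ((\<lambda>j. \<bar>(\<Sum>i<n. x i j) / real n\<bar>) ` {..<p})) \<le> ennreal (c1 * E x + c2 + c3 * Tl x)"
      by (rule ennreal_leI[OF pt])
    also have "\<dots> = (ennreal c1 * (\<Sum>j<p. ennreal (exp (lm * R j x)) + ennreal (exp (- lm * R j x)))
             + ennreal c2) + ennreal c3 * (\<Sum>i<n. ennreal (tlv p \<tau> (x i)))"
    proof -
      have E0: "0 \<le> E x" unfolding E_def by (intro sum_nonneg add_nonneg_nonneg) auto
      have T0: "0 \<le> Tl x" unfolding Tl_def using tl_nonneg[OF p1] by (intro sum_nonneg) auto
      have "ennreal (c1 * E x + c2 + c3 * Tl x) = (ennreal c1 * ennreal (E x) + ennreal c2) + ennreal c3 * ennreal (Tl x)"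
      proof -
        have m1: "0 \<le> c1 * E x" "0 \<le> c3 * Tl x" using c0 E0 T0 by auto
        have "ennreal (c1 * E x + c2 + c3 * Tl x) = ennreal (c1 * E x + c2) + ennreal (c3 * Tl x)"
          using m1 c0 by (intro ennreal_plus) auto
        also have "ennreal (c1 * E x + c2) = ennreal (c1 * E x) + ennreal c2"
          using m1 c0 by (intro ennreal_plus) auto
        also have "ennreal (c1 * E x) = ennreal c1 * ennreal (E x)"
          using c0 E0 by (intro ennreal_mult) auto
        also have "ennreal (c3 * Tl x) = ennreal c3 * ennreal (Tl x)"
          using c0 T0 by (intro ennreal_mult) auto
        finally show ?thesis .
      qed
      moreover have "ennreal (E x) = (\<Sum>j<p. ennreal (exp (lm * R j x)) + ennreal (exp (- lm * R j x)))"
        unfolding E_def by (simp add: sum_ennreal[symmetric] ennreal_plus add_nonneg_nonneg del: sum_ennreal)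
      moreover have "ennreal (Tl x) = (\<Sum>i<n. ennreal (tlv p \<tau> (x i)))"
        unfolding Tl_def using tl_nonneg[OF p1] by simp
      ultimately show ?thesis by simp
    qed
    finally show "ennreal (Max ((\<lambda>j. \<bar>(\<Sum>i<n. x i j) / real n\<bar>) ` {..<p})) \<le> (ennreal c1 * (\<Sum>j<p. ennreal (exp (lm * R j x)) + ennreal (exp (- lm * R j x)))
             + ennreal c2) + ennreal c3 * (\<Sum>i<n. ennreal (tlv p \<tau> (x i)))" .
  qed
  also have "\<dots> = (ennreal c1 * (\<Sum>j<p. (\<integral>\<^sup>+x. ennreal (exp (lm * R j x)) \<partial>\<Omega>) + (\<integral>\<^sup>+x. ennreal (exp (- lm * R j x)) \<partial>\<Omega>))
             + ennreal c2) + ennreal c3 * (\<Sum>i<n. \<integral>\<^sup>+x. ennreal (tlv p \<tau> (x i)) \<partial>\<Omega>)"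
  proof -
    have mS: "(\<lambda>x. \<Sum>j<p. ennreal (exp (lm * R j x)) + ennreal (exp (- lm * R j x))) \<in> borel_measurable \<Omega>"
      by (intro borel_measurable_sum borel_measurable_add mexp) auto
    have mT: "(\<lambda>x. \<Sum>i<n. ennreal (tlv p \<tau> (x i))) \<in> borel_measurable \<Omega>"
      using mtl by (intro borel_measurable_sum) auto
    have e1: "(\<integral>\<^sup>+x. (\<Sum>j<p. ennreal (exp (lm * R j x)) + ennreal (exp (- lm * R j x))) \<partial>\<Omega>)
        = (\<Sum>j<p. (\<integral>\<^sup>+x. ennreal (exp (lm * R j x)) \<partial>\<Omega>) + (\<integral>\<^sup>+x. ennreal (exp (- lm * R j x)) \<partial>\<Omega>))"
    proof -
      have mf: "(\<lambda>x. ennreal (exp (lm * R j x)) + ennreal (exp (- lm * R j x))) \<in> borel_measurable \<Omega>" if "j \<in> {..<p}" for j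
        using that by (intro borel_measurable_add mexp) auto
      have "(\<integral>\<^sup>+x. (\<Sum>j<p. ennreal (exp (lm * R j x)) + ennreal (exp (- lm * R j x))) \<partial>\<Omega>)
         = (\<Sum>j<p. (\<integral>\<^sup>+x. ennreal (exp (lm * R j x)) + ennreal (exp (- lm * R j x)) \<partial>\<Omega>))"
        by (rule nn_integral_sum) (rule mf)
      also have "\<dots> = (\<Sum>j<p. (\<integral>\<^sup>+x. ennreal (exp (lm * R j x)) \<partial>\<Omega>) + (\<integral>\<^sup>+x. ennreal (exp (- lm * R j x)) \<partial>\<Omega>))"
      proof (rule sum.cong[OF refl])
        fix j assume "j \<in> {..<p}"
        then have j: "j < p" by simp
        show "(\<integral>\<^sup>+x. ennreal (exp (lm * R j x)) + ennreal (exp (- lm * R j x)) \<partial>\<Omega>) = (\<integral>\<^sup>+x. ennreal (exp (lm * R j x)) \<partial>\<Omega>) + (\<integral>\<^sup>+x. ennreal (exp (- lm * R j x)) \<partial>\<Omega>)"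
          by (rule nn_integral_add[OF mexp[OF j] mexp[OF j]])
      qed
      finally show ?thesis .
    qed
    have e2: "(\<integral>\<^sup>+x. (\<Sum>i<n. ennreal (tlv p \<tau> (x i))) \<partial>\<Omega>) = (\<Sum>i<n. \<integral>\<^sup>+x. ennreal (tlv p \<tau> (x i)) \<partial>\<Omega>)"
      using mtl by (intro nn_integral_sum) auto
    have "(\<integral>\<^sup>+x. (ennreal c1 * (\<Sum>j<p. ennreal (exp (lm * R j x)) + ennreal (exp (- lm * R j x)))
             + ennreal c2) + ennreal c3 * (\<Sum>i<n. ennreal (tlv p \<tau> (x i))) \<partial>\<Omega>)
        = (\<integral>\<^sup>+x. ennreal c1 * (\<Sum>j<p. ennreal (exp (lm * R j x)) + ennreal (exp (- lm * R j x)))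
             + ennreal c2 \<partial>\<Omega>) + (\<integral>\<^sup>+x. ennreal c3 * (\<Sum>i<n. ennreal (tlv p \<tau> (x i))) \<partial>\<Omega>)"
      using mS mT by (intro nn_integral_add) auto
    also have "(\<integral>\<^sup>+x. ennreal c1 * (\<Sum>j<p. ennreal (exp (lm * R j x)) + ennreal (exp (- lm * R j x)))
             + ennreal c2 \<partial>\<Omega>) = (\<integral>\<^sup>+x. ennreal c1 * (\<Sum>j<p. ennreal (exp (lm * R j x)) + ennreal (exp (- lm * R j x))) \<partial>\<Omega>)
             + (\<integral>\<^sup>+x. ennreal c2 \<partial>\<Omega>)"
      using mS by (intro nn_integral_add) auto
    also have "(\<integral>\<^sup>+x. ennreal c1 * (\<Sum>j<p. ennreal (exp (lm * R j x)) + ennreal (exp (- lm * R j x))) \<partial>\<Omega>)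
        = ennreal c1 * (\<integral>\<^sup>+x. (\<Sum>j<p. ennreal (exp (lm * R j x)) + ennreal (exp (- lm * R j x))) \<partial>\<Omega>)"
      using mS by (rule nn_integral_cmult)
    also have "(\<integral>\<^sup>+x. ennreal c2 \<partial>\<Omega>) = ennreal c2"
      by (simp add: PP.emeasure_space_1)
    also have "(\<integral>\<^sup>+x. ennreal c3 * (\<Sum>i<n. ennreal (tlv p \<tau> (x i))) \<partial>\<Omega>)
        = ennreal c3 * (\<integral>\<^sup>+x. (\<Sum>i<n. ennreal (tlv p \<tau> (x i))) \<partial>\<Omega>)"
      using mT by (rule nn_integral_cmult)
    finally show ?thesis unfolding e1 e2 .
  qed
  also have "\<dots> \<le> (ennreal c1 * (\<Sum>j<p. ennreal (exp A) + ennreal (exp A)) + ennreal c2)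
       + ennreal c3 * (\<Sum>i<n. ennreal (\<integral>y. tlv p \<tau> y \<partial>\<mu> i))"
  proof -
    have "(\<integral>\<^sup>+x. ennreal (exp (s * R j x)) \<partial>\<Omega>) \<le> ennreal (exp A)" if "j < p" "\<bar>s\<bar> \<le> lm" for j s
      unfolding \<Omega>_def R_def A_def using mgfR[OF tau lm that(2) that(1)] by simp
    note hh = this
    have hp: "(\<integral>\<^sup>+x. ennreal (exp (lm * R j x)) \<partial>\<Omega>) \<le> ennreal (exp A)" if "j < p" for j
      using hh[of j lm] that lm by simp
    have hm: "(\<integral>\<^sup>+x. ennreal (exp (- lm * R j x)) \<partial>\<Omega>) \<le> ennreal (exp A)" if "j < p" for j
      using hh[of j "- lm"] that lm by simp
    have hm': "(\<integral>\<^sup>+x. ennreal (exp (- (lm * R j x))) \<partial>\<Omega>) \<le> ennreal (exp A)" if "j < p" for j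
      using hm[OF that] by simp
    show ?thesis using lm T_eq hp hm hm'
      by (intro add_mono mult_left_mono sum_mono order.refl) auto
  qed
  also have "\<dots> = ennreal (c1 * (2 * real p * exp A) + c2 + c3 * (\<Sum>i<n. \<integral>y. tlv p \<tau> y \<partial>\<mu> i))"
  proof -
    have s1: "(\<Sum>j<p. ennreal (exp A) + ennreal (exp A)) = ennreal (2 * real p * exp A)"
    proof -
      have "(\<Sum>j<p. ennreal (exp A) + ennreal (exp A)) = (\<Sum>j<p. ennreal (2 * exp A))"
        by (intro sum.cong refl) (simp add: ennreal_plus[symmetric])
      also have "\<dots> = ennreal (\<Sum>j<p. 2 * exp A)" by (rule sum_ennreal) simp
      also have "(\<Sum>j<p. 2 * exp A) = 2 * real p * exp A" by simp
      finally show ?thesis .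
    qed
    have s2: "(\<Sum>i<n. ennreal (\<integral>y. tlv p \<tau> y \<partial>\<mu> i)) = ennreal (\<Sum>i<n. \<integral>y. tlv p \<tau> y \<partial>\<mu> i)"
      using Tnn by (rule sum_ennreal)
    have S0: "0 \<le> (\<Sum>i<n. \<integral>y. tlv p \<tau> y \<partial>\<mu> i)" using Tnn by (rule sum_nonneg)
    have P0: "0 \<le> 2 * real p * exp A" by simp
    have "ennreal c1 * ennreal (2 * real p * exp A) = ennreal (c1 * (2 * real p * exp A))"
      using c0 P0 by (intro ennreal_mult[symmetric]) auto
    moreover have "ennreal c3 * ennreal (\<Sum>i<n. \<integral>y. tlv p \<tau> y \<partial>\<mu> i) = ennreal (c3 * (\<Sum>i<n. \<integral>y. tlv p \<tau> y \<partial>\<mu> i))"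
      using c0 S0 by (intro ennreal_mult[symmetric]) auto
    moreover have "ennreal (c1 * (2 * real p * exp A)) + ennreal c2 = ennreal (c1 * (2 * real p * exp A) + c2)"
      using c0 P0 by (intro ennreal_plus[symmetric]) auto
    moreover have "ennreal (c1 * (2 * real p * exp A) + c2) + ennreal (c3 * (\<Sum>i<n. \<integral>y. tlv p \<tau> y \<partial>\<mu> i))
        = ennreal (c1 * (2 * real p * exp A) + c2 + c3 * (\<Sum>i<n. \<integral>y. tlv p \<tau> y \<partial>\<mu> i))"
      using c0 P0 S0 by (intro ennreal_plus[symmetric]) auto
    ultimately show ?thesis unfolding s1 s2 by metis
  qed
  also have "\<dots> \<le> ennreal ((1 + ln (2 * real p)) / (real n * lm) + 2 * (\<tau> powr (1 - q) * B powr q) + lm * exp (lm * \<tau>) * \<sigma>\<^sup>2 / 2)"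
  proof (rule ennreal_leI)
    have a: "c1 * (2 * real p * exp A) = 1 / (real n * lm)"
      unfolding c1_def K_def using p1 n0 lm by (simp add: field_simps)
    have b: "c2 = (ln (2 * real p) + A) / (real n * lm)"
      unfolding c2_def K_def using p1 by (simp add: ln_mult)
    have b2: "A / (real n * lm) = \<tau> powr (1 - q) * B powr q + lm * exp (lm * \<tau>) * \<sigma>\<^sup>2 / 2"
      unfolding A_def using n0 lm by (simp add: field_simps power2_eq_square)
    have c: "c3 * (\<Sum>i<n. \<integral>y. tlv p \<tau> y \<partial>\<mu> i) \<le> \<tau> powr (1 - q) * B powr q"
      unfolding c3_def using T_sum[OF tau] n0 by (simp add: field_simps)
    have "c1 * (2 * real p * exp A) + c2 = (1 + ln (2 * real p)) / (real n * lm) + A / (real n * lm)"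
      unfolding a b by (simp add: add_divide_distrib)
    then show "c1 * (2 * real p * exp A) + c2 + c3 * (\<Sum>i<n. \<integral>y. tlv p \<tau> y \<partial>\<mu> i) \<le> (1 + ln (2 * real p)) / (real n * lm) + 2 * (\<tau> powr (1 - q) * B powr q) + lm * exp (lm * \<tau>) * \<sigma>\<^sup>2 / 2"
      using b2 c by linarith
  qed
  finally show ?thesis unfolding \<Omega>_def .
qed


lemma simple_bound:
  assumes tau: "\<tau> > 0"
  shows "(\<integral>\<^sup>+x. ennreal (Max ((\<lambda>j. \<bar>(\<Sum>i<n. x i j) / real n\<bar>) ` {..<p})) \<partial>PiM {..<n} \<mu>)
     \<le> ennreal (\<tau> + \<tau> powr (1 - q) * B powr q)"
proof -
  define \<Omega> where "\<Omega> = PiM {..<n} \<mu>"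
  have n0: "0 < n" using n1 by simp
  interpret PP: prob_space \<Omega> unfolding \<Omega>_def using ps by (intro prob_space_PiM) auto
  define Tl where "Tl x = (\<Sum>i<n. tlv p \<tau> (x i))" for x
  have pt: "Max ((\<lambda>j. \<bar>(\<Sum>i<n. x i j) / real n\<bar>) ` {..<p}) \<le> \<tau> + (1 / real n) * Tl x" for x
  proof -
    have "Max ((\<lambda>j. \<bar>(\<Sum>i<n. x i j) / real n\<bar>) ` {..<p}) \<in> (\<lambda>j. \<bar>(\<Sum>i<n. x i j) / real n\<bar>) ` {..<p}"
      using p1 by (intro Max_in) (auto simp: lessThan_empty_iff)
    then obtain j0 where j0: "j0 < p"
      and mx0: "Max ((\<lambda>j. \<bar>(\<Sum>i<n. x i j) / real n\<bar>) ` {..<p}) = \<bar>(\<Sum>i<n. x i j0) / real n\<bar>"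
      by auto
    have "\<bar>\<Sum>i<n. x i j0\<bar> \<le> (\<Sum>i<n. \<bar>x i j0\<bar>)" by (rule sum_abs)
    also have "\<dots> \<le> (\<Sum>i<n. \<tau> + tlv p \<tau> (x i))"
    proof (rule sum_mono)
      fix i
      have "\<bar>x i j0\<bar> \<le> mx p (x i)" by (rule mx_ge[OF j0])
      also have "\<dots> \<le> \<tau> + tlv p \<tau> (x i)" unfolding tlv_def using tau by auto
      finally show "\<bar>x i j0\<bar> \<le> \<tau> + tlv p \<tau> (x i)" .
    qed
    also have "\<dots> = real n * \<tau> + Tl x" unfolding Tl_def by (simp add: sum.distrib)
    finally have h: "\<bar>\<Sum>i<n. x i j0\<bar> \<le> real n * \<tau> + Tl x" .
    have "Max ((\<lambda>j. \<bar>(\<Sum>i<n. x i j) / real n\<bar>) ` {..<p}) = \<bar>\<Sum>i<n. x i j0\<bar> / real n"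
      using mx0 by simp
    also have "\<dots> \<le> (real n * \<tau> + Tl x) / real n"
      using h n0 by (intro divide_right_mono) auto
    also have "\<dots> = \<tau> + (1 / real n) * Tl x" using n0 by (simp add: field_simps)
    finally show ?thesis .
  qed
  have mcomp: "(\<lambda>x. f (x i)) \<in> borel_measurable \<Omega>" if "i < n" "f \<in> borel_measurable (\<mu> i)" for f i
    unfolding \<Omega>_def using that by (intro measurable_compose[OF measurable_component_singleton]) auto
  have mtl: "(\<lambda>x. ennreal (tlv p \<tau> (x i))) \<in> borel_measurable \<Omega>" if i: "i < n" for i
    using mcomp[OF i meas_tl[OF sets_mu[OF i]]] by measurable
  have mT: "(\<lambda>x. \<Sum>i<n. ennreal (tlv p \<tau> (x i))) \<in> borel_measurable \<Omega>"
    using mtl by (intro borel_measurable_sum) auto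
  have T_eq: "(\<integral>\<^sup>+x. ennreal (tlv p \<tau> (x i)) \<partial>\<Omega>) = ennreal (\<integral>y. tlv p \<tau> y \<partial>\<mu> i)" if i: "i < n" for i
  proof -
    have "(\<integral>\<^sup>+x. ennreal (tlv p \<tau> (x i)) \<partial>\<Omega>) = (\<integral>\<^sup>+y. ennreal (tlv p \<tau> y) \<partial>\<mu> i)"
      unfolding \<Omega>_def using meas_tl[OF sets_mu[OF i]] by (intro comp_int[OF i]) measurable
    also have "\<dots> = ennreal (\<integral>y. tlv p \<tau> y \<partial>\<mu> i)"
      using int_tl[OF i tau] tl_nonneg[OF p1] by (intro nn_integral_eq_integral) auto
    finally show ?thesis .
  qed
  have Tnn: "0 \<le> (\<integral>y. tlv p \<tau> y \<partial>\<mu> i)" for i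
    using tl_nonneg[OF p1] by (intro integral_nonneg_AE) auto
  have S0: "0 \<le> (\<Sum>i<n. \<integral>y. tlv p \<tau> y \<partial>\<mu> i)" using Tnn by (rule sum_nonneg)
  have c3: "0 \<le> 1 / real n" by simp
  have "(\<integral>\<^sup>+x. ennreal (Max ((\<lambda>j. \<bar>(\<Sum>i<n. x i j) / real n\<bar>) ` {..<p})) \<partial>\<Omega>)
      \<le> (\<integral>\<^sup>+x. ennreal \<tau> + ennreal (1 / real n) * (\<Sum>i<n. ennreal (tlv p \<tau> (x i))) \<partial>\<Omega>)"
  proof (intro nn_integral_mono)
    fix x
    have T0: "0 \<le> Tl x" unfolding Tl_def using tl_nonneg[OF p1] by (intro sum_nonneg) auto
    have "ennreal (Max ((\<lambda>j. \<bar>(\<Sum>i<n. x i j) / real n\<bar>) ` {..<p})) \<le> ennreal (\<tau> + (1 / real n) * Tl x)"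
      by (rule ennreal_leI[OF pt])
    also have "\<dots> = ennreal \<tau> + ennreal ((1 / real n) * Tl x)"
      using tau T0 by (intro ennreal_plus) auto
    also have "ennreal ((1 / real n) * Tl x) = ennreal (1 / real n) * ennreal (Tl x)"
      using T0 by (intro ennreal_mult) auto
    also have "ennreal (Tl x) = (\<Sum>i<n. ennreal (tlv p \<tau> (x i)))"
      unfolding Tl_def using tl_nonneg[OF p1] by simp
    finally show "ennreal (Max ((\<lambda>j. \<bar>(\<Sum>i<n. x i j) / real n\<bar>) ` {..<p})) \<le> ennreal \<tau> + ennreal (1 / real n) * (\<Sum>i<n. ennreal (tlv p \<tau> (x i)))" .
  qed
  also have "\<dots> = ennreal \<tau> + ennreal (1 / real n) * (\<Sum>i<n. \<integral>\<^sup>+x. ennreal (tlv p \<tau> (x i)) \<partial>\<Omega>)"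
  proof -
    have "(\<integral>\<^sup>+x. ennreal \<tau> + ennreal (1 / real n) * (\<Sum>i<n. ennreal (tlv p \<tau> (x i))) \<partial>\<Omega>)
        = (\<integral>\<^sup>+x. ennreal \<tau> \<partial>\<Omega>) + (\<integral>\<^sup>+x. ennreal (1 / real n) * (\<Sum>i<n. ennreal (tlv p \<tau> (x i))) \<partial>\<Omega>)"
      using mT by (intro nn_integral_add) auto
    also have "(\<integral>\<^sup>+x. ennreal \<tau> \<partial>\<Omega>) = ennreal \<tau>" by (simp add: PP.emeasure_space_1)
    also have "(\<integral>\<^sup>+x. ennreal (1 / real n) * (\<Sum>i<n. ennreal (tlv p \<tau> (x i))) \<partial>\<Omega>)
        = ennreal (1 / real n) * (\<integral>\<^sup>+x. (\<Sum>i<n. ennreal (tlv p \<tau> (x i))) \<partial>\<Omega>)"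
      using mT by (rule nn_integral_cmult)
    also have "(\<integral>\<^sup>+x. (\<Sum>i<n. ennreal (tlv p \<tau> (x i))) \<partial>\<Omega>) = (\<Sum>i<n. \<integral>\<^sup>+x. ennreal (tlv p \<tau> (x i)) \<partial>\<Omega>)"
      using mtl by (intro nn_integral_sum) auto
    finally show ?thesis .
  qed
  also have "\<dots> = ennreal \<tau> + ennreal (1 / real n) * ennreal (\<Sum>i<n. \<integral>y. tlv p \<tau> y \<partial>\<mu> i)"
    using T_eq Tnn by (simp add: sum_ennreal[symmetric] del: sum_ennreal)
  also have "\<dots> = ennreal (\<tau> + (1 / real n) * (\<Sum>i<n. \<integral>y. tlv p \<tau> y \<partial>\<mu> i))"
  proof -
    have "ennreal (1 / real n) * ennreal (\<Sum>i<n. \<integral>y. tlv p \<tau> y \<partial>\<mu> i) = ennreal ((1 / real n) * (\<Sum>i<n. \<integral>y. tlv p \<tau> y \<partial>\<mu> i))"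
      using c3 S0 by (intro ennreal_mult[symmetric]) auto
    moreover have "ennreal \<tau> + ennreal ((1 / real n) * (\<Sum>i<n. \<integral>y. tlv p \<tau> y \<partial>\<mu> i)) = ennreal (\<tau> + (1 / real n) * (\<Sum>i<n. \<integral>y. tlv p \<tau> y \<partial>\<mu> i))"
      using tau c3 S0 by (intro ennreal_plus[symmetric]) auto
    ultimately show ?thesis by metis
  qed
  also have "\<dots> \<le> ennreal (\<tau> + \<tau> powr (1 - q) * B powr q)"
  proof (rule ennreal_leI)
    have "(1 / real n) * (\<Sum>i<n. \<integral>y. tlv p \<tau> y \<partial>\<mu> i) \<le> \<tau> powr (1 - q) * B powr q"
      using T_sum[OF tau] n0 by (simp add: field_simps)
    then show "\<tau> + (1 / real n) * (\<Sum>i<n. \<integral>y. tlv p \<tau> y \<partial>\<mu> i) \<le> \<tau> + \<tau> powr (1 - q) * B powr q" by simp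
  qed
  finally show ?thesis unfolding \<Omega>_def .
qed

end



lemma exp_half_le2: "exp (1/2::real) \<le> 2"
proof -
  have "exp (1/2::real) * exp (1/2) = exp 1" by (simp flip: exp_add)
  also have "\<dots> < 272/100" by (rule e_less_272)
  finally have "exp (1/2::real) * exp (1/2) < 2 * 2" by simp
  show ?thesis
  proof (rule ccontr)
    assume "\<not> exp (1/2::real) \<le> 2"
    then have "2 < exp (1/2::real)" by simp
    then have "2 * 2 \<le> exp (1/2::real) * exp (1/2)" by (intro mult_mono) auto
    then show False using \<open>exp (1/2::real) * exp (1/2) < 2 * 2\<close> by simp
  qed
qed

lemma case1:
  fixes q \<sigma> B L :: real
  assumes q: "q > 2" and pos: "\<sigma> > 0" "B > 0" "L > 0"
    and c: "(B\<^sup>2 / \<sigma>\<^sup>2) powr (q / (q - 2)) * L \<le> exp 1"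
  shows "\<exists>tau>0. \<exists>lm>0. 3 * L / lm + 2 * (tau powr (1 - q) * B powr q) + lm * exp (lm * tau) * \<sigma>\<^sup>2 / 2
            \<le> 9 * (\<sigma> * sqrt L)"
proof -
  define s where "s = ln \<sigma>"
  define b where "b = ln B"
  define l where "l = ln L"
  have S: "\<sigma> = exp s" and Bb: "B = exp b" and Ll: "L = exp l"
    using pos by (simp_all add: s_def b_def l_def)
  have r: "B\<^sup>2 / \<sigma>\<^sup>2 = exp (2 * b - 2 * s)"
    unfolding S Bb by (simp add: exp_diff power2_eq_square flip: exp_add)
  have "exp (q / (q - 2) * (2 * b - 2 * s) + l) \<le> exp 1"
    using c unfolding r Ll by (simp add: powr_def exp_add)
  then have X: "q / (q - 2) * (2 * b - 2 * s) + l \<le> 1" by simp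
  have eqX: "(q - 2) / 2 * (q / (q - 2) * (2 * b - 2 * s) + l) = q * (b - s) + (q - 2) * l / 2"
    using q by (simp add: field_simps)
  have "(q - 2) / 2 * (q / (q - 2) * (2 * b - 2 * s) + l) \<le> (q - 2) / 2 * 1"
    using X q by (intro mult_left_mono) auto
  then have X2: "q * (b - s) + (q - 2) * l / 2 \<le> (q - 2) / 2" using eqX by simp
  define t where "t = 1/2 + s - l/2"
  define tau where "tau = exp t"
  define lm where "lm = exp (- t)"
  have sq: "sqrt L = exp (l / 2)"
    unfolding Ll by (rule real_sqrt_unique) (simp_all add: power2_eq_square flip: exp_add)
  have lt: "lm * tau = 1"
  proof -
    have "exp (- t) * exp t = 1" by (simp add: exp_minus)

    then show ?thesis using lm_def tau_def by simp
  qed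
  have RHS: "\<sigma> * sqrt L = exp (s + l / 2)" unfolding S sq by (simp add: exp_add)
  have t1: "3 * L / lm = 3 * exp (1/2) * exp (s + l / 2)"
    unfolding lm_def Ll t_def by (simp add: exp_minus field_simps flip: exp_add)
  have t2: "lm * exp (lm * tau) * \<sigma>\<^sup>2 / 2 = exp (1/2) * exp (s + l / 2) / 2"
  proof -
    have "lm * exp (lm * tau) * \<sigma>\<^sup>2 / 2 = exp (- t) * exp 1 * (exp s * exp s) / 2"
      using lt unfolding lm_def S by (simp add: power2_eq_square)
    also have "\<dots> = exp (- t + 1 + 2 * s) / 2" by (simp add: exp_add[symmetric])
    finally have "lm * exp (lm * tau) * \<sigma>\<^sup>2 / 2 = exp (- t + 1 + 2 * s) / 2" .
    also have "- t + 1 + 2 * s = 1/2 + (s + l / 2)" unfolding t_def by simp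
    finally show ?thesis by (simp add: exp_add)
  qed
  have t3: "2 * (tau powr (1 - q) * B powr q) \<le> 2 * exp (s + l / 2)"
  proof -
    have "tau powr (1 - q) * B powr q = exp ((1 - q) * t + q * b)"
      unfolding tau_def Bb by (simp add: powr_def exp_add)
    also have "\<dots> \<le> exp (s + l / 2)"
    proof -
      have "(1 - q) * t + q * b - (s + l / 2) = (1 - q) / 2 + (q * (b - s) + (q - 2) * l / 2)"
        unfolding t_def by (simp add: field_simps)
      also have "\<dots> \<le> (1 - q) / 2 + (q - 2) / 2" using X2 by (rule add_left_mono)
      also have "\<dots> \<le> 0" by (simp add: field_simps)
      finally show ?thesis by simp
    qed
    finally show ?thesis by simp
  qed
  have e2: "exp (1/2::real) \<le> 2" by (rule exp_half_le2)
  have E0: "exp (s + l / 2) > 0" by simp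
  have "3 * L / lm + 2 * (tau powr (1 - q) * B powr q) + lm * exp (lm * tau) * \<sigma>\<^sup>2 / 2
      \<le> 3 * exp (1/2) * exp (s + l / 2) + 2 * exp (s + l / 2) + exp (1/2) * exp (s + l / 2) / 2"
    using t1 t2 t3 by simp
  also have "\<dots> \<le> 3 * 2 * exp (s + l / 2) + 2 * exp (s + l / 2) + 2 * exp (s + l / 2) / 2"
    using e2 E0 by (intro add_mono mult_right_mono divide_right_mono) auto
  also have "\<dots> = 9 * (\<sigma> * sqrt L)" unfolding RHS by simp
  finally have F: "3 * L / lm + 2 * (tau powr (1 - q) * B powr q) + lm * exp (lm * tau) * \<sigma>\<^sup>2 / 2
      \<le> 9 * (\<sigma> * sqrt L)" .
  have "tau > 0" "lm > 0" by (simp_all add: tau_def lm_def)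
  then show ?thesis using F by blast
qed


lemma exp_aux16:
  fixes k :: real and q :: real
  assumes q: "q > 2"
  shows "exp ((2 - 2 / q) * k - exp k / 2) \<le> 16"
proof (cases "k \<le> 0")
  case True
  have "(2 - 2 / q) * k \<le> 0"
  proof -
    have "2 / q < 2" using q by (simp add: divide_less_eq)
    then show ?thesis using True by (intro mult_nonneg_nonpos) auto
  qed
  then have "(2 - 2 / q) * k - exp k / 2 \<le> 0" using exp_gt_zero[of k] by linarith
  then have "exp ((2 - 2 / q) * k - exp k / 2) \<le> exp 0" by (rule exp_le_cancel_iff[THEN iffD2])
  then show ?thesis by (rule order_trans) simp
next
  case False
  define e where "e = exp k"
  have e0: "e > 0" unfolding e_def by simp
  have "(2 - 2 / q) * k \<le> 2 * k" using False q by (simp add: field_simps)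
  then have "exp ((2 - 2 / q) * k - exp k / 2) \<le> exp (2 * k - e / 2)" unfolding e_def by simp
  also have "exp (2 * k - e / 2) = e\<^sup>2 / exp (e / 2)"
    unfolding e_def by (simp add: exp_diff power2_eq_square flip: exp_add)
  also have "\<dots> \<le> 16"
  proof -
    have "exp (e / 2) = exp (e / 4) * exp (e / 4)" by (simp flip: exp_add)
    moreover have "e / 4 \<le> exp (e / 4)" using exp_ge_add_one_self[of "e/4"] by linarith
    moreover have "(e / 4) * (e / 4) \<le> exp (e / 4) * exp (e / 4)"
      using \<open>e / 4 \<le> exp (e / 4)\<close> e0 by (intro mult_mono) auto
    ultimately have "(e / 4) * (e / 4) \<le> exp (e / 2)" by simp
    then have "e\<^sup>2 \<le> 16 * exp (e / 2)" by (simp add: power2_eq_square field_simps)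
    then show ?thesis by (simp add: divide_le_eq)
  qed
  finally show ?thesis .
qed

lemma case2:
  fixes q \<sigma> B L :: real
  assumes q: "q > 2" and pos: "\<sigma> > 0" "B > 0" "L > 0"
    and c: "\<not> (B\<^sup>2 / \<sigma>\<^sup>2) powr (q / (q - 2)) * L \<le> exp 1"
  shows "\<exists>tau>0. \<exists>lm>0. 3 * L / lm + 2 * (tau powr (1 - q) * B powr q) + lm * exp (lm * tau) * \<sigma>\<^sup>2 / 2
            \<le> 12 * (B * L powr (1 - 1 / q) * (ln (B\<^sup>2 / \<sigma>\<^sup>2 * L powr (1 - 2 / q))) powr (1 / q - 1))"
proof -
  define s where "s = ln \<sigma>"
  define b where "b = ln B"
  define l where "l = ln L"
  have S: "\<sigma> = exp s" and Bb: "B = exp b" and Ll: "L = exp l"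
    using pos by (simp_all add: s_def b_def l_def)
  have r: "B\<^sup>2 / \<sigma>\<^sup>2 = exp (2 * b - 2 * s)"
    unfolding S Bb by (simp add: exp_diff power2_eq_square flip: exp_add)
  have "\<not> exp (q / (q - 2) * (2 * b - 2 * s) + l) \<le> exp 1"
    using c unfolding r Ll by (simp add: powr_def exp_add)
  then have X: "q / (q - 2) * (2 * b - 2 * s) + l > 1" by simp
  have eqX: "(q - 2) / q * (q / (q - 2) * (2 * b - 2 * s) + l) = (2 * b - 2 * s) + (1 - 2 / q) * l"
    using q by (simp add: field_simps)
  have qq: "(q - 2) / q > 0" using q by simp
  have "(q - 2) / q * 1 < (q - 2) / q * (q / (q - 2) * (2 * b - 2 * s) + l)"
    using X qq by (intro mult_strict_left_mono) auto
  then have X2: "(2 * b - 2 * s) + (1 - 2 / q) * l > 0" using eqX qq by simp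
  define ell where "ell = (2 * b - 2 * s) + (1 - 2 / q) * l"
  have ell0: "ell > 0" using X2 unfolding ell_def .
  have ln_eq: "ln (B\<^sup>2 / \<sigma>\<^sup>2 * L powr (1 - 2 / q)) = ell"
    unfolding r Ll ell_def by (simp add: powr_def flip: exp_add)
  define k where "k = ln ell"
  have ek: "ell = exp k" unfolding k_def using ell0 by simp
  define u where "u = b + (1 - 1 / q) * l + (1 / q - 1) * k"
  have U: "B * L powr (1 - 1 / q) * (ln (B\<^sup>2 / \<sigma>\<^sup>2 * L powr (1 - 2 / q))) powr (1 / q - 1) = exp u"
    unfolding ln_eq unfolding Bb Ll ek u_def by (simp add: powr_def flip: exp_add)
  define tau where "tau = exp (b + (k - l) / q)"
  define lm where "lm = exp (k - b - (k - l) / q) / 2"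
  have lt: "lm * tau = ell / 2"
  proof -
    have "lm * tau = exp (k - b - (k - l) / q + (b + (k - l) / q)) / 2"
      unfolding lm_def tau_def exp_add[of "k - b - (k - l) / q" "b + (k - l) / q"] by simp
    also have "k - b - (k - l) / q + (b + (k - l) / q) = k" by simp
    finally show ?thesis using ek by simp
  qed
  have t1: "3 * L / lm = 6 * exp u"
  proof -
    have "3 * L / lm = 6 * exp (l - (k - b - (k - l) / q))"
      unfolding lm_def Ll by (simp add: exp_diff)
    also have "l - (k - b - (k - l) / q) = u" unfolding u_def using q by (simp add: field_simps)
    finally show ?thesis .
  qed
  have t3: "2 * (tau powr (1 - q) * B powr q) = 2 * exp u"
  proof -
    have "tau powr (1 - q) * B powr q = exp ((1 - q) * (b + (k - l) / q) + q * b)"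
      unfolding tau_def Bb by (simp add: powr_def flip: exp_add)
    also have "(1 - q) * (b + (k - l) / q) + q * b = u" unfolding u_def using q by (simp add: field_simps)
    finally show ?thesis by simp
  qed
  have t2: "lm * exp (lm * tau) * \<sigma>\<^sup>2 / 2 \<le> 4 * exp u"
  proof -
    have "lm * exp (lm * tau) * \<sigma>\<^sup>2 / 2 = exp (k - b - (k - l) / q) * exp (ell / 2) * (exp s * exp s) / 4"
      unfolding lt unfolding lm_def S by (simp add: power2_eq_square)
    also have "\<dots> = exp (k - b - (k - l) / q + ell / 2 + 2 * s) / 4"
      by (simp add: exp_add[symmetric])
    also have "k - b - (k - l) / q + ell / 2 + 2 * s = u + ((2 - 2 / q) * k - exp k / 2)"
      unfolding u_def ek[symmetric] unfolding ell_def using q by (simp add: field_simps)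
    also have "exp (u + ((2 - 2 / q) * k - exp k / 2)) / 4 = exp u * exp ((2 - 2 / q) * k - exp k / 2) / 4"
      by (simp add: exp_add)
    also have "\<dots> \<le> exp u * 16 / 4"
      using exp_aux16[OF q, of k] by (intro divide_right_mono mult_left_mono) auto
    finally show ?thesis by simp
  qed
  have F: "3 * L / lm + 2 * (tau powr (1 - q) * B powr q) + lm * exp (lm * tau) * \<sigma>\<^sup>2 / 2
      \<le> 12 * (B * L powr (1 - 1 / q) * (ln (B\<^sup>2 / \<sigma>\<^sup>2 * L powr (1 - 2 / q))) powr (1 / q - 1))"
    unfolding U using t1 t2 t3 by simp
  have "tau > 0" "lm > 0" by (simp_all add: tau_def lm_def)
  then show ?thesis using F by blast
qed


lemma ln2_half: "1 / 2 \<le> ln (2::real)"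
proof -
  have "exp (1/2::real) \<le> exp (ln 2)" using exp_half_le2 by simp
  then show ?thesis by (subst (asm) exp_le_cancel_iff)
qed

theorem theorem4p5:
  shows "\<exists>C>0. \<forall>q \<sigma> B p n. q > 2 \<longrightarrow> p \<ge> 1 \<longrightarrow> n \<ge> 1 \<longrightarrow> \<sigma> > 0 \<longrightarrow> B > 0 \<longrightarrow>
           E_q q \<sigma> B p n \<le> ennreal (C * min B (U_star q \<sigma> B p n))"
proof (intro exI[of _ 12] conjI allI impI)
  show "(0::real) < 12" by simp
  fix q \<sigma> B :: real and p n :: nat
  assume q: "q > 2" and p1: "p \<ge> 1" and n1: "n \<ge> 1" and sig: "\<sigma> > 0" and Bpos: "B > 0"
  define L where "L = ln (2 * real p) / real n"
  have lnp: "1 / 2 \<le> ln (2 * real p)"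
  proof -
    have "ln (2::real) \<le> ln (2 * real p)" using p1 by simp
    then show ?thesis using ln2_half by linarith
  qed
  have L0: "L > 0" unfolding L_def using lnp n1 by simp
  define U where "U = U_star q \<sigma> B p n"
  have Ucase: "\<exists>tau>0. \<exists>lm>0. 3 * L / lm + 2 * (tau powr (1 - q) * B powr q) + lm * exp (lm * tau) * \<sigma>\<^sup>2 / 2 \<le> 12 * U"
  proof (cases "(B\<^sup>2 / \<sigma>\<^sup>2) powr (q / (q - 2)) * L \<le> exp 1")
    case True
    then have UU: "U = \<sigma> * sqrt L" unfolding U_def U_star_def L_def Let_def by simp
    obtain tau lm where tl: "tau > 0" "lm > 0"
      "3 * L / lm + 2 * (tau powr (1 - q) * B powr q) + lm * exp (lm * tau) * \<sigma>\<^sup>2 / 2 \<le> 9 * (\<sigma> * sqrt L)"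
      using case1[OF q sig Bpos L0 True] by blast
    have "9 * (\<sigma> * sqrt L) \<le> 12 * U" unfolding UU using sig L0 by simp
    then show ?thesis using tl by (intro exI[of _ tau] exI[of _ lm]) auto
  next
    case False
    then have UU: "U = B * L powr (1 - 1 / q) * (ln (B\<^sup>2 / \<sigma>\<^sup>2 * L powr (1 - 2 / q))) powr (1 / q - 1)"
      unfolding U_def U_star_def L_def Let_def by simp
    show ?thesis unfolding UU by (rule case2[OF q sig Bpos L0 False])
  qed
  then obtain tau lm where tl: "tau > 0" "lm > 0"
    "3 * L / lm + 2 * (tau powr (1 - q) * B powr q) + lm * exp (lm * tau) * \<sigma>\<^sup>2 / 2 \<le> 12 * U"
    by blast
  have q1: "q \<ge> 1" using q by simp
  show "E_q q \<sigma> B p n \<le> ennreal (12 * min B (U_star q \<sigma> B p n))"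
    unfolding E_q_def U_def[symmetric]
  proof (rule SUP_least)
    fix \<mu> assume adm: "\<mu> \<in> admissible_laws q \<sigma> B p n"
    let ?I = "(\<integral>\<^sup>+x. ennreal (Max ((\<lambda>j. \<bar>(\<Sum>i<n. x i j) / real n\<bar>) ` {..<p})) \<partial>PiM {..<n} \<mu>)"
    have b1: "?I \<le> ennreal (B + B powr (1 - q) * B powr q)"
      by (rule simple_bound[OF adm n1 p1 q1 sig Bpos Bpos])
    have "B powr (1 - q) * B powr q = B" using Bpos by (simp flip: powr_add)
    then have b1': "?I \<le> ennreal (2 * B)" using b1 by simp
    have b2: "?I \<le> ennreal ((1 + ln (2 * real p)) / (real n * lm) + 2 * (tau powr (1 - q) * B powr q) + lm * exp (lm * tau) * \<sigma>\<^sup>2 / 2)"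
      by (rule main_bound[OF adm n1 p1 q1 sig Bpos tl(1) tl(2)])
    have "(1 + ln (2 * real p)) / (real n * lm) \<le> 3 * L / lm"
    proof -
      have "(1 + ln (2 * real p)) / (real n * lm) \<le> (3 * ln (2 * real p)) / (real n * lm)"
        using lnp tl(2) n1 by (intro divide_right_mono) auto
      also have "\<dots> = 3 * L / lm" unfolding L_def by (simp add: field_simps)
      finally show ?thesis .
    qed
    then have b2': "?I \<le> ennreal (12 * U)"
      using b2 tl(3) by (elim order_trans) (intro ennreal_leI, linarith)
    show "?I \<le> ennreal (12 * min B U)"
    proof (cases "B \<le> U")
      case True
      then have "ennreal (2 * B) \<le> ennreal (12 * min B U)" using Bpos by (intro ennreal_leI) auto
      then show ?thesis using b1' by (rule order_trans[rotated])
    next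
      case False
      then show ?thesis using b2' by simp
    qed
  qed
qed

end
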